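(* For every formula $\chi$ and every finite closure $\Sigma$ of $\chi$ (i.e. a finite closure with $\chi\in\Sigma$): if $\mathbf{PTKv}^{\ast}(\Sigma)\nvdash\neg\chi$, then $\chi$ is satisfiable, i.e. there exist a model $M$ and a world $w$ with $M,w\models\chi$.
   Context: Language and semantics. Fix countable sets $\mathsf{Prop}$ (propositional variables), $\mathsf{Term}$ (atomic terms) and a finite set of agents $\mathcal{A}$. $\Theta_K=[0,1]\cap\mathbb{Q}$, $\Theta_V^+=(\frac12,1]\cap\mathbb{Q}$. Formulas: $\varphi::= p\mid t=s\mid\neg\varphi\mid(\varphi\to\psi)\mid K_i^\theta\varphi\mid Kv_i^\eta(t)$ ($\theta\in\Theta_K$, $\eta\in\Theta_V^+$). A model is $M=(W,D,\{P_i\}_{i\in\mathcal{A}},V,\mathsf{val})$ with $W,D$ nonempty, each $P_i(w)$ a countably additive probability measure on the powerset of $W$, $V:W\times\mathsf{Prop}\to\{0,1\}$, $\mathsf{val}:W\times\mathsf{Term}\to D$; $M,w\models p$ iff $V(w,p)=1$; $M,w\models t=s$ iff $\mathsf{val}(w,t)=\mathsf{val}(w,s)$; Boolean clauses as usual; $M,w\models K_i^\theta\varphi$ iff $P_i(w)(\{u\mid M,u\models\varphi\})\ge\theta$; $M,w\models Kv_i^\eta(t)$ iff there is a unique $d\in D$ with $P_i(w)(\{u\mid\mathsf{val}(u,t)=d\})\ge\eta$. Proof systems. $\mathbf{PTKv}^{+}$ is the Hilbert system with rules Modus Ponens and $\mathrm{Nec}_K$ (from $\varphi$ infer $K_i^\theta\varphi$)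 and axiom schemata: propositional tautologies; $t=t$; $t=s\to s=t$; $(t=s\wedge s=u)\to t=u$; $t=s\to((t=u)\leftrightarrow(s=u))$; $K_i^{\theta'}\varphi\to K_i^\theta\varphi$ ($\theta\le\theta'$); $K_i^\alpha(\varphi\to\psi)\to(K_i^\beta\varphi\to K_i^{\max\{0,\alpha+\beta-1\}}\psi)$; $K_i^\alpha\varphi\to\neg K_i^\beta\neg\varphi$ ($\alpha+\beta>1$); $K_i^0\varphi$; $K_i^1(t=s)\to(K_i^\theta(t=u)\leftrightarrow K_i^\theta(s=u))$; $K_i^1(t=s)\to(Kv_i^\eta(t)\leftrightarrow Kv_i^\eta(s))$; $K_i^1(\varphi\leftrightarrow\psi)\to(K_i^\theta\varphi\leftrightarrow K_i^\theta\psi)$; $K_i^\alpha\varphi\wedge K_i^\beta\psi\wedge K_i^1\neg(\varphi\wedge\psi)\to K_i^{\alpha+\beta}(\varphi\vee\psi)$ ($\alpha+\beta\le1$); $Kv_i^\eta(t)\to Kv_i^\zeta(t)$ ($\zeta\le\eta$, both in $\Theta_V^+$). Finite closure: a finite set $\Sigma$ of formulas closed under subformulas and single negations (if $\varphi\in\Sigma$ then $\neg\varphi\in\Sigma$ unless $\varphi$ is itself a negation $\neg\psi$ with $\psi\in\Sigma$), containing $t=s$ and $\neg(t=s)$ for all $t,s\in T_\Sigma$ (the atomic terms occurring in $\Sigma$), with all thresholds from a finite set of rationals. $\mathsf{Type}(\Sigma)$ is the set of $\Gamma\subseteq\Sigma$ that are $\mathbf{PTKv}^{+}$-consistent ($\mathbf{PTKv}^{+}\nvdash\neg\bigwedge\Gamma$)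 and saturated (for each $\varphi\in\Sigma$, $\varphi\in\Gamma$ or $\neg\varphi\in\Gamma$). Constraint systems. Let $K=\{1,\dots,|T_\Sigma|\}$. For $\Delta\in\mathsf{Type}(\Sigma)$, $\mathcal{F}(\Delta)=\{f:T_\Sigma\to K\mid \forall t,s,\ f(t)=f(s)\iff (t=s)\in\Delta\}$. $\Lambda_i^\Gamma$ is the set of formulas in $\Gamma$ of the forms $K_i^\theta\varphi$, $\neg K_i^\theta\varphi$, $Kv_i^\eta(t)$, $\neg Kv_i^\eta(t)$. For nonempty $S\subseteq\mathsf{Type}(\Sigma)$ with $\Gamma\in S$, $\mathsf{FC}(\Gamma,S,i)$ in real variables $z_{\Delta,f}$ ($\Delta\in S$, $f\in\mathcal{F}(\Delta)$) requires: $z_{\Delta,f}\ge0$; $\sum_{\Delta\in S}\sum_f z_{\Delta,f}=1$; for $K_i^\theta\varphi\in\Gamma$: $\sum_{\Delta\in S,\varphi\in\Delta}\sum_f z_{\Delta,f}\ge\theta$; for $\neg K_i^\theta\varphi\in\Gamma$: that sum $<\theta$; for $Kv_i^\eta(t)\in\Gamma$: some $k\in K$ has $\sum_{\Delta\in S}\sum_{f(t)=k}z_{\Delta,f}\ge\eta$; for $\neg Kv_i^\eta(t)\in\Gamma$: every $k\in K$ has $\sum_{\Delta\in S}\sum_{f(t)=k}z_{\Delta,f}<\eta$. Feasible means some real assignment satisfies all requirements. Refinement. $\mathcal{T}_0=\mathsf{Type}(\Sigma)$, $\mathcal{T}_{\ell+1}=\{\Delta\in\mathcal{T}_\ell\mid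 \mathsf{FC}(\Delta,\mathcal{T}_\ell,i)\text{ feasible for all } i\}$; it stabilizes at $\mathsf{Type}^\ast(\Sigma)$. For each $\Gamma\in\mathsf{Type}(\Sigma)\setminus\mathsf{Type}^\ast(\Sigma)$, with $\Gamma\in\mathcal{T}_\ell\setminus\mathcal{T}_{\ell+1}$, fix an agent $i_\Gamma$ with $\mathsf{FC}(\Gamma,\mathcal{T}_\ell,i_\Gamma)$ infeasible. $\mathbf{PTKv}^\ast(\Sigma)$ is $\mathbf{PTKv}^{+}$ plus the axioms $\neg\bigwedge\Lambda_{i_\Gamma}^\Gamma$ for all such $\Gamma$. *)

theory Defs
  imports "HOL-Probability.Probability"
begin

text \<open>Thresholds are rationals; the admissible ranges (Theta_K = [0,1], Theta_V^+ = (1/2,1])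
  are imposed by the well-formedness predicate wf_form.\<close>

datatype ('p, 't, 'a) form =
    PVar 'p
  | Eq 't 't
  | Neg "('p, 't, 'a) form"
  | Imp "('p, 't, 'a) form" "('p, 't, 'a) form"
  | Kn 'a rat "('p, 't, 'a) form"
  | Kv 'a rat 't

primrec wf_form :: "('p, 't, 'a) form \<Rightarrow> bool" where
  "wf_form (PVar p) = True"
| "wf_form (Eq t s) = True"
| "wf_form (Neg \<phi>) = wf_form \<phi>"
| "wf_form (Imp \<phi> \<psi>) = (wf_form \<phi> \<and> wf_form \<psi>)"
| "wf_form (Kn i \<theta> \<phi>) = (0 \<le> \<theta> \<and> \<theta> \<le> 1 \<and> wf_form \<phi>)"
| "wf_form (Kv i \<eta> t) = (1/2 < \<eta> \<and> \<eta> \<le> 1)"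

definition And :: "('p, 't, 'a) form \<Rightarrow> ('p, 't, 'a) form \<Rightarrow> ('p, 't, 'a) form" where
  "And \<phi> \<psi> = Neg (Imp \<phi> (Neg \<psi>))"

definition Or :: "('p, 't, 'a) form \<Rightarrow> ('p, 't, 'a) form \<Rightarrow> ('p, 't, 'a) form" where
  "Or \<phi> \<psi> = Imp (Neg \<phi>) \<psi>"

definition Iff :: "('p, 't, 'a) form \<Rightarrow> ('p, 't, 'a) form \<Rightarrow> ('p, 't, 'a) form" where
  "Iff \<phi> \<psi> = And (Imp \<phi> \<psi>) (Imp \<psi> \<phi>)"

text \<open>Verum, used only as the empty conjunction.\<close>
definition Top :: "('p, 't, 'a) form" where
  "Top = Imp (Eq undefined undefined) (Eq undefined undefined)"

fun conj_list :: "('p, 't, 'a) form list \<Rightarrow> ('p, 't, 'a) form" where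
  "conj_list [] = Top"
| "conj_list [\<phi>] = \<phi>"
| "conj_list (\<phi> # \<psi> # xs) = And \<phi> (conj_list (\<psi> # xs))"

text \<open>Conjunction of a finite set of formulas (order is immaterial for derivability).\<close>
definition Conj :: "('p, 't, 'a) form set \<Rightarrow> ('p, 't, 'a) form" where
  "Conj \<Gamma> = conj_list (SOME xs. set xs = \<Gamma>)"

datatype ('w, 'd, 'a, 'p, 't) model =
  Model (W: "'w set") (Dom: "'d set") (Pr: "'a \<Rightarrow> 'w \<Rightarrow> 'w measure")
        (Vl: "'w \<Rightarrow> 'p \<Rightarrow> bool") (vl: "'w \<Rightarrow> 't \<Rightarrow> 'd")

definition is_model :: "('w, 'd, 'a, 'p, 't) model \<Rightarrow> bool" where
  "is_model M \<longleftrightarrow> W M \<noteq> {} \<and> Dom M \<noteq> {}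
     \<and> (\<forall>i. \<forall>w\<in>W M. prob_space (Pr M i w) \<and> space (Pr M i w) = W M
                     \<and> sets (Pr M i w) = Pow (W M))
     \<and> (\<forall>w\<in>W M. \<forall>t. vl M w t \<in> Dom M)"

primrec sat :: "('w, 'd, 'a, 'p, 't) model \<Rightarrow> 'w \<Rightarrow> ('p, 't, 'a) form \<Rightarrow> bool" where
  "sat M w (PVar p) = Vl M w p"
| "sat M w (Eq t s) = (vl M w t = vl M w s)"
| "sat M w (Neg \<phi>) = (\<not> sat M w \<phi>)"
| "sat M w (Imp \<phi> \<psi>) = (sat M w \<phi> \<longrightarrow> sat M w \<psi>)"
| "sat M w (Kn i \<theta> \<phi>) = (measure (Pr M i w) {u \<in> W M. sat M u \<phi>} \<ge> real_of_rat \<theta>)"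
| "sat M w (Kv i \<eta> t) = (\<exists>!d. d \<in> Dom M \<and> measure (Pr M i w) {u \<in> W M. vl M u t = d} \<ge> real_of_rat \<eta>)"

primrec peval :: "(('p, 't, 'a) form \<Rightarrow> bool) \<Rightarrow> ('p, 't, 'a) form \<Rightarrow> bool" where
  "peval v (PVar p) = v (PVar p)"
| "peval v (Eq t s) = v (Eq t s)"
| "peval v (Neg \<phi>) = (\<not> peval v \<phi>)"
| "peval v (Imp \<phi> \<psi>) = (peval v \<phi> \<longrightarrow> peval v \<psi>)"
| "peval v (Kn i \<theta> \<phi>) = v (Kn i \<theta> \<phi>)"
| "peval v (Kv i \<eta> t) = v (Kv i \<eta> t)"

definition tautology :: "('p, 't, 'a) form \<Rightarrow> bool" where
  "tautology \<phi> \<longleftrightarrow> (\<forall>v. peval v \<phi>)"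

text \<open>Axiom schemata of PTKv+ (threshold side conditions; the ranges of thresholds are
  enforced by requiring the instance to be well-formed in derivable).\<close>
inductive ax :: "('p, 't, 'a) form \<Rightarrow> bool" where
  taut: "tautology \<phi> \<Longrightarrow> ax \<phi>"
| eq_refl: "ax (Eq t t)"
| eq_sym: "ax (Imp (Eq t s) (Eq s t))"
| eq_trans: "ax (Imp (And (Eq t s) (Eq s u)) (Eq t u))"
| eq_subst: "ax (Imp (Eq t s) (Iff (Eq t u) (Eq s u)))"
| mono: "\<theta> \<le> \<theta>' \<Longrightarrow> ax (Imp (Kn i \<theta>' \<phi>) (Kn i \<theta> \<phi>))"
| kdist: "ax (Imp (Kn i \<alpha> (Imp \<phi> \<psi>)) (Imp (Kn i \<beta> \<phi>) (Kn i (max 0 (\<alpha> + \<beta> - 1)) \<psi>)))"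
| kcons: "\<alpha> + \<beta> > 1 \<Longrightarrow> ax (Imp (Kn i \<alpha> \<phi>) (Neg (Kn i \<beta> (Neg \<phi>))))"
| kzero: "ax (Kn i 0 \<phi>)"
| keq: "ax (Imp (Kn i 1 (Eq t s)) (Iff (Kn i \<theta> (Eq t u)) (Kn i \<theta> (Eq s u))))"
| kveq: "ax (Imp (Kn i 1 (Eq t s)) (Iff (Kv i \<eta> t) (Kv i \<eta> s)))"
| kiff: "ax (Imp (Kn i 1 (Iff \<phi> \<psi>)) (Iff (Kn i \<theta> \<phi>) (Kn i \<theta> \<psi>)))"
| kadd: "\<alpha> + \<beta> \<le> 1 \<Longrightarrow>
     ax (Imp (And (And (Kn i \<alpha> \<phi>) (Kn i \<beta> \<psi>)) (Kn i 1 (Neg (And \<phi> \<psi>))))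
             (Kn i (\<alpha> + \<beta>) (Or \<phi> \<psi>)))"
| kvmono: "\<zeta> \<le> \<eta> \<Longrightarrow> ax (Imp (Kv i \<eta> t) (Kv i \<zeta> t))"

inductive derivable :: "('p, 't, 'a) form set \<Rightarrow> ('p, 't, 'a) form \<Rightarrow> bool" for A where
  Ax: "ax \<phi> \<Longrightarrow> wf_form \<phi> \<Longrightarrow> derivable A \<phi>"
| Extra: "\<phi> \<in> A \<Longrightarrow> derivable A \<phi>"
| MP: "derivable A (Imp \<phi> \<psi>) \<Longrightarrow> derivable A \<phi> \<Longrightarrow> derivable A \<psi>"
| Nec: "derivable A \<phi> \<Longrightarrow> 0 \<le> \<theta> \<Longrightarrow> \<theta> \<le> 1 \<Longrightarrow> derivable A (Kn i \<theta> \<phi>)"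

abbreviation PTKv_plus :: "('p, 't, 'a) form \<Rightarrow> bool" where
  "PTKv_plus \<phi> \<equiv> derivable {} \<phi>"

primrec subforms :: "('p, 't, 'a) form \<Rightarrow> ('p, 't, 'a) form set" where
  "subforms (PVar p) = {PVar p}"
| "subforms (Eq t s) = {Eq t s}"
| "subforms (Neg \<phi>) = insert (Neg \<phi>) (subforms \<phi>)"
| "subforms (Imp \<phi> \<psi>) = insert (Imp \<phi> \<psi>) (subforms \<phi> \<union> subforms \<psi>)"
| "subforms (Kn i \<theta> \<phi>) = insert (Kn i \<theta> \<phi>) (subforms \<phi>)"
| "subforms (Kv i \<eta> t) = {Kv i \<eta> t}"

primrec terms_of :: "('p, 't, 'a) form \<Rightarrow> 't set" where
  "terms_of (PVar p) = {}"
| "terms_of (Eq t s) = {t, s}"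
| "terms_of (Neg \<phi>) = terms_of \<phi>"
| "terms_of (Imp \<phi> \<psi>) = terms_of \<phi> \<union> terms_of \<psi>"
| "terms_of (Kn i \<theta> \<phi>) = terms_of \<phi>"
| "terms_of (Kv i \<eta> t) = {t}"

definition T_of :: "('p, 't, 'a) form set \<Rightarrow> 't set" where
  "T_of \<Sigma> = (\<Union>\<phi>\<in>\<Sigma>. terms_of \<phi>)"

text \<open>A finite closure. (Thresholds of a finite set of formulas automatically come from
  a finite set of rationals.)\<close>
definition finite_closure :: "('p, 't, 'a) form set \<Rightarrow> bool" where
  "finite_closure \<Sigma> \<longleftrightarrow> finite \<Sigma> \<and> (\<forall>\<phi>\<in>\<Sigma>. wf_form \<phi>)
     \<and> (\<forall>\<phi>\<in>\<Sigma>. subforms \<phi> \<subseteq> \<Sigma>)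
     \<and> (\<forall>\<phi>\<in>\<Sigma>. \<not> (\<exists>\<psi>. \<phi> = Neg \<psi> \<and> \<psi> \<in> \<Sigma>) \<longrightarrow> Neg \<phi> \<in> \<Sigma>)
     \<and> (\<forall>t\<in>T_of \<Sigma>. \<forall>s\<in>T_of \<Sigma>. Eq t s \<in> \<Sigma> \<and> Neg (Eq t s) \<in> \<Sigma>)"

fun sneg :: "('p, 't, 'a) form \<Rightarrow> ('p, 't, 'a) form" where
  "sneg (Neg \<psi>) = \<psi>"
| "sneg \<phi> = Neg \<phi>"

definition Types :: "('p, 't, 'a) form set \<Rightarrow> ('p, 't, 'a) form set set" where
  "Types \<Sigma> = {\<Gamma>. \<Gamma> \<subseteq> \<Sigma> \<and> \<not> PTKv_plus (Neg (Conj \<Gamma>))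
                 \<and> (\<forall>\<phi>\<in>\<Sigma>. \<phi> \<in> \<Gamma> \<or> sneg \<phi> \<in> \<Gamma>)}"

text \<open>Functions f : T_Sigma -> K = {1..|T_Sigma|}, represented as total functions that are 0
  outside T_Sigma.\<close>
definition Fs :: "('p, 't, 'a) form set \<Rightarrow> ('p, 't, 'a) form set \<Rightarrow> ('t \<Rightarrow> nat) set" where
  "Fs \<Sigma> \<Delta> = {f. (\<forall>t\<in>T_of \<Sigma>. f t \<in> {1..card (T_of \<Sigma>)}) \<and> (\<forall>t. t \<notin> T_of \<Sigma> \<longrightarrow> f t = 0)
                 \<and> (\<forall>t\<in>T_of \<Sigma>. \<forall>s\<in>T_of \<Sigma>. f t = f s \<longleftrightarrow> Eq t s \<in> \<Delta>)}"

definition FC_index :: "('p, 't, 'a) form set \<Rightarrow> ('p, 't, 'a) form set set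
     \<Rightarrow> (('p, 't, 'a) form set \<times> ('t \<Rightarrow> nat)) set" where
  "FC_index \<Sigma> S = {(\<Delta>, f). \<Delta> \<in> S \<and> f \<in> Fs \<Sigma> \<Delta>}"

definition FC_feasible :: "('p, 't, 'a) form set \<Rightarrow> ('p, 't, 'a) form set
     \<Rightarrow> ('p, 't, 'a) form set set \<Rightarrow> 'a \<Rightarrow> bool" where
  "FC_feasible \<Sigma> \<Gamma> S i \<longleftrightarrow> (\<exists>z :: ('p, 't, 'a) form set \<times> ('t \<Rightarrow> nat) \<Rightarrow> real.
      (\<forall>x\<in>FC_index \<Sigma> S. z x \<ge> 0)
    \<and> (\<Sum>x\<in>FC_index \<Sigma> S. z x) = 1
    \<and> (\<forall>\<theta> \<phi>. Kn i \<theta> \<phi> \<in> \<Gamma> \<longrightarrow>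
          (\<Sum>x\<in>{(\<Delta>, f)\<in>FC_index \<Sigma> S. \<phi> \<in> \<Delta>}. z x) \<ge> real_of_rat \<theta>)
    \<and> (\<forall>\<theta> \<phi>. Neg (Kn i \<theta> \<phi>) \<in> \<Gamma> \<longrightarrow>
          (\<Sum>x\<in>{(\<Delta>, f)\<in>FC_index \<Sigma> S. \<phi> \<in> \<Delta>}. z x) < real_of_rat \<theta>)
    \<and> (\<forall>\<eta> t. Kv i \<eta> t \<in> \<Gamma> \<longrightarrow> (\<exists>k\<in>{1..card (T_of \<Sigma>)}.
          (\<Sum>x\<in>{(\<Delta>, f)\<in>FC_index \<Sigma> S. f t = k}. z x) \<ge> real_of_rat \<eta>))
    \<and> (\<forall>\<eta> t. Neg (Kv i \<eta> t) \<in> \<Gamma> \<longrightarrow> (\<forall>k\<in>{1..card (T_of \<Sigma>)}.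
          (\<Sum>x\<in>{(\<Delta>, f)\<in>FC_index \<Sigma> S. f t = k}. z x) < real_of_rat \<eta>)))"

primrec Tref :: "('p, 't, 'a) form set \<Rightarrow> nat \<Rightarrow> ('p, 't, 'a) form set set" where
  "Tref \<Sigma> 0 = Types \<Sigma>"
| "Tref \<Sigma> (Suc l) = {\<Delta> \<in> Tref \<Sigma> l. \<forall>i. FC_feasible \<Sigma> \<Delta> (Tref \<Sigma> l) i}"

text \<open>The stable value of the decreasing sequence.\<close>
definition Types_star :: "('p, 't, 'a) form set \<Rightarrow> ('p, 't, 'a) form set set" where
  "Types_star \<Sigma> = (\<Inter>l. Tref \<Sigma> l)"

definition Lambda :: "'a \<Rightarrow> ('p, 't, 'a) form set \<Rightarrow> ('p, 't, 'a) form set" where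
  "Lambda i \<Gamma> = {\<phi>\<in>\<Gamma>. (\<exists>\<theta> \<psi>. \<phi> = Kn i \<theta> \<psi> \<or> \<phi> = Neg (Kn i \<theta> \<psi>))
                      \<or> (\<exists>\<eta> t. \<phi> = Kv i \<eta> t \<or> \<phi> = Neg (Kv i \<eta> t))}"

definition agent_choice :: "('p, 't, 'a) form set \<Rightarrow> (('p, 't, 'a) form set \<Rightarrow> 'a) \<Rightarrow> bool" where
  "agent_choice \<Sigma> ig \<longleftrightarrow> (\<forall>\<Gamma> l. \<Gamma> \<in> Tref \<Sigma> l \<and> \<Gamma> \<notin> Tref \<Sigma> (Suc l)
                             \<longrightarrow> \<not> FC_feasible \<Sigma> \<Gamma> (Tref \<Sigma> l) (ig \<Gamma>))"

definition star_axioms :: "('p, 't, 'a) form set \<Rightarrow> (('p, 't, 'a) form set \<Rightarrow> 'a)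
     \<Rightarrow> ('p, 't, 'a) form set" where
  "star_axioms \<Sigma> ig = {Neg (Conj (Lambda (ig \<Gamma>) \<Gamma>)) | \<Gamma>. \<Gamma> \<in> Types \<Sigma> - Types_star \<Sigma>}"

abbreviation PTKv_star :: "('p, 't, 'a) form set \<Rightarrow> (('p, 't, 'a) form set \<Rightarrow> 'a)
     \<Rightarrow> ('p, 't, 'a) form \<Rightarrow> bool" where
  "PTKv_star \<Sigma> ig \<phi> \<equiv> derivable (star_axioms \<Sigma> ig) \<phi>"

definition satisfiable_form :: "('p, 't, 'a) form \<Rightarrow> bool" where
  "satisfiable_form \<phi>0 \<longleftrightarrow> (\<exists>M w.
       is_model (M :: (nat, nat, 'a, 'p, 't) Defs.model) \<and> w \<in> W M \<and> sat M w \<phi>0)"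

end

theory Submission
  imports Defs
begin


primrec fsat :: "'x set \<Rightarrow> ('a \<Rightarrow> 'x \<Rightarrow> 'x \<Rightarrow> real) \<Rightarrow> ('x \<Rightarrow> 'p \<Rightarrow> bool) \<Rightarrow> ('x \<Rightarrow> 't \<Rightarrow> nat)
   \<Rightarrow> 'x \<Rightarrow> ('p, 't, 'a) form \<Rightarrow> bool" where
  "fsat X p V val x (PVar q) = V x q"
| "fsat X p V val x (Eq t s) = (val x t = val x s)"
| "fsat X p V val x (Neg \<phi>) = (\<not> fsat X p V val x \<phi>)"
| "fsat X p V val x (Imp \<phi> \<psi>) = (fsat X p V val x \<phi> \<longrightarrow> fsat X p V val x \<psi>)"
| "fsat X p V val x (Kn i \<theta> \<phi>) = ((\<Sum>y\<in>{y\<in>X. fsat X p V val y \<phi>}. p i x y) \<ge> real_of_rat \<theta>)"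
| "fsat X p V val x (Kv i \<eta> t) = (\<exists>!d. (\<Sum>y\<in>{y\<in>X. val y t = d}. p i x y) \<ge> real_of_rat \<eta>)"

lemma transfer:
  fixes X :: "'x set" and p :: "'a \<Rightarrow> 'x \<Rightarrow> 'x \<Rightarrow> real"
    and V :: "'x \<Rightarrow> 'p \<Rightarrow> bool" and val :: "'x \<Rightarrow> 't \<Rightarrow> nat"
  assumes fin: "finite X" and ne: "X \<noteq> {}"
    and nn: "\<And>i x y. x \<in> X \<Longrightarrow> y \<in> X \<Longrightarrow> p i x y \<ge> 0"
    and one: "\<And>i x. x \<in> X \<Longrightarrow> (\<Sum>y\<in>X. p i x y) = 1"
  shows "\<exists>M :: (nat, nat, 'a, 'p, 't) Defs.model. \<exists>enc.
     is_model M \<and> (\<forall>x\<in>X. enc x \<in> W M \<and> (\<forall>\<phi>. sat M (enc x) \<phi> = fsat X p V val x \<phi>))"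
proof -
  define enc where "enc = to_nat_on X"
  have inj: "inj_on enc X" unfolding enc_def using fin by (intro inj_on_to_nat_on countable_finite)
  define dec where "dec = the_inv_into X enc"
  have dec[simp]: "dec (enc x) = x" if "x \<in> X" for x
    unfolding dec_def using inj that by (simp add: the_inv_into_f_f)
  define M :: "(nat, nat, 'a, 'p, 't) Defs.model" where
    "M = Model (enc ` X) UNIV (\<lambda>i n. point_measure (enc ` X) (\<lambda>m. ennreal (p i (dec n) (dec m))))
          (\<lambda>n. V (dec n)) (\<lambda>n. val (dec n))"
  have fin2: "finite (enc ` X)" using fin by simp
  have meas: "measure (Pr M i (enc x)) (enc ` B) = (\<Sum>y\<in>B. p i x y)" if "x \<in> X" "B \<subseteq> X" for i x B
  proof -
    have "measure (Pr M i (enc x)) (enc ` B) = (\<Sum>m\<in>enc ` B. p i (dec (enc x)) (dec m))"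
    proof -
      have "\<And>m. m \<in> enc ` X \<Longrightarrow> 0 \<le> p i x (dec m)" using nn that by auto
      then show ?thesis unfolding M_def using that fin2
        by (simp add: measure_point_measure_finite_if[where f="\<lambda>m. p i x (dec m)"] image_mono)
    qed
    also have "\<dots> = (\<Sum>y\<in>B. p i x y)"
      using that inj by (subst sum.reindex) (auto intro!: sum.cong dest: inj_on_subset[of _ X B])
    finally show ?thesis .
  qed
  have sum1: "(\<Sum>s\<in>enc ` X. ennreal (p i w (dec s))) = 1" if "w \<in> X" for i w
  proof -
    have "(\<Sum>s\<in>enc ` X. ennreal (p i w (dec s))) = (\<Sum>y\<in>X. ennreal (p i w y))"
      using inj by (simp add: sum.reindex)
    also have "\<dots> = ennreal (\<Sum>y\<in>X. p i w y)" using nn that by (simp add: sum_ennreal)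
    finally show ?thesis using one that by simp
  qed
  have ism: "is_model M"
    unfolding is_model_def using ne
    by (auto simp: M_def space_point_measure sets_point_measure nn one fin2 sum1
        intro!: prob_space_point_measure)
  have "sat M (enc x) \<phi> = fsat X p V val x \<phi>" if "x \<in> X" for x \<phi>
    using that
  proof (induction \<phi> arbitrary: x)
    case (Kn i \<theta> \<phi>)
    have "{u \<in> W M. sat M u \<phi>} = enc ` {y\<in>X. fsat X p V val y \<phi>}"
      using Kn.IH by (auto simp: M_def)
    then show ?case using Kn.prems by (simp add: meas)
  next
    case (Kv i \<eta> t)
    have "{u \<in> W M. vl M u t = d} = enc ` {y\<in>X. val y t = d}" for d
      by (auto simp: M_def)
    then have "measure (Pr M i (enc x)) {u \<in> W M. vl M u t = d} = (\<Sum>y\<in>{y\<in>X. val y t = d}. p i x y)" for d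
      using Kv.prems by (simp add: meas)
    moreover have "Dom M = UNIV" by (simp add: M_def)
    ultimately show ?case by simp
  qed (auto simp: M_def)
  then show ?thesis using ism by (auto simp: M_def intro!: exI[of _ M] exI[of _ enc])
qed



definition FCw :: "('p, 't, 'a) form set \<Rightarrow> ('p, 't, 'a) form set
     \<Rightarrow> ('p, 't, 'a) form set set \<Rightarrow> 'a \<Rightarrow> (('p, 't, 'a) form set \<times> ('t \<Rightarrow> nat) \<Rightarrow> real) \<Rightarrow> bool" where
  "FCw \<Sigma> \<Gamma> S i z \<longleftrightarrow> (
      (\<forall>x\<in>FC_index \<Sigma> S. z x \<ge> 0)
    \<and> (\<Sum>x\<in>FC_index \<Sigma> S. z x) = 1
    \<and> (\<forall>\<theta> \<phi>. Kn i \<theta> \<phi> \<in> \<Gamma> \<longrightarrow>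
          (\<Sum>x\<in>{(\<Delta>, f)\<in>FC_index \<Sigma> S. \<phi> \<in> \<Delta>}. z x) \<ge> real_of_rat \<theta>)
    \<and> (\<forall>\<theta> \<phi>. Neg (Kn i \<theta> \<phi>) \<in> \<Gamma> \<longrightarrow>
          (\<Sum>x\<in>{(\<Delta>, f)\<in>FC_index \<Sigma> S. \<phi> \<in> \<Delta>}. z x) < real_of_rat \<theta>)
    \<and> (\<forall>\<eta> t. Kv i \<eta> t \<in> \<Gamma> \<longrightarrow> (\<exists>k\<in>{1..card (T_of \<Sigma>)}.
          (\<Sum>x\<in>{(\<Delta>, f)\<in>FC_index \<Sigma> S. f t = k}. z x) \<ge> real_of_rat \<eta>))
    \<and> (\<forall>\<eta> t. Neg (Kv i \<eta> t) \<in> \<Gamma> \<longrightarrow> (\<forall>k\<in>{1..card (T_of \<Sigma>)}.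
          (\<Sum>x\<in>{(\<Delta>, f)\<in>FC_index \<Sigma> S. f t = k}. z x) < real_of_rat \<eta>)))"

lemma FC_feasible_iff: "FC_feasible \<Sigma> \<Gamma> S i \<longleftrightarrow> (\<exists>z. FCw \<Sigma> \<Gamma> S i z)"
  unfolding FC_feasible_def FCw_def by (rule refl)

lemma FCw_nn: "FCw \<Sigma> \<Gamma> S i z \<Longrightarrow> x \<in> FC_index \<Sigma> S \<Longrightarrow> z x \<ge> 0"
  unfolding FCw_def by blast
lemma FCw_one: "FCw \<Sigma> \<Gamma> S i z \<Longrightarrow> (\<Sum>x\<in>FC_index \<Sigma> S. z x) = 1"
  unfolding FCw_def by blast
lemma FCw_Kn: "FCw \<Sigma> \<Gamma> S i z \<Longrightarrow> Kn i \<theta> \<phi> \<in> \<Gamma> \<Longrightarrow>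
    (\<Sum>x\<in>{(\<Delta>, f)\<in>FC_index \<Sigma> S. \<phi> \<in> \<Delta>}. z x) \<ge> real_of_rat \<theta>"
  unfolding FCw_def by blast
lemma FCw_nKn: "FCw \<Sigma> \<Gamma> S i z \<Longrightarrow> Neg (Kn i \<theta> \<phi>) \<in> \<Gamma> \<Longrightarrow>
    (\<Sum>x\<in>{(\<Delta>, f)\<in>FC_index \<Sigma> S. \<phi> \<in> \<Delta>}. z x) < real_of_rat \<theta>"
  unfolding FCw_def by blast
lemma FCw_Kv: "FCw \<Sigma> \<Gamma> S i z \<Longrightarrow> Kv i \<eta> t \<in> \<Gamma> \<Longrightarrow> (\<exists>k\<in>{1..card (T_of \<Sigma>)}.
          (\<Sum>x\<in>{(\<Delta>, f)\<in>FC_index \<Sigma> S. f t = k}. z x) \<ge> real_of_rat \<eta>)"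
  unfolding FCw_def by blast
lemma FCw_nKv: "FCw \<Sigma> \<Gamma> S i z \<Longrightarrow> Neg (Kv i \<eta> t) \<in> \<Gamma> \<Longrightarrow> k \<in> {1..card (T_of \<Sigma>)} \<Longrightarrow>
          (\<Sum>x\<in>{(\<Delta>, f)\<in>FC_index \<Sigma> S. f t = k}. z x) < real_of_rat \<eta>"
  unfolding FCw_def by blast

lemma set_fst: "{(\<Delta>, f)\<in>X. P \<Delta>} = {y\<in>X. P (fst y)}"
  by auto

lemma set_snd: "{(\<Delta>, f)\<in>X. f t = k} = {y\<in>X. snd y t = k}"
  by auto

lemma deriv_mono: "derivable {} \<phi> \<Longrightarrow> derivable A \<phi>"
  by (induction rule: derivable.induct) (auto intro: derivable.intros)

lemma peval_Top[simp]: "peval v Top"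
  by (simp add: Top_def)

lemma wf_Top[simp]: "wf_form Top"
  by (simp add: Top_def)

lemma peval_conj_list: "peval v (conj_list xs) = (\<forall>\<phi>\<in>set xs. peval v \<phi>)"
  by (induction xs rule: conj_list.induct) (auto simp: And_def)

lemma wf_conj_list: "(\<forall>\<phi>\<in>set xs. wf_form \<phi>) \<Longrightarrow> wf_form (conj_list xs)"
  by (induction xs rule: conj_list.induct) (auto simp: And_def)

lemma Conj_set: "finite S \<Longrightarrow> set (SOME xs. set xs = S) = S"
  by (rule someI_ex) (simp add: finite_list)

lemma peval_Conj: "finite S \<Longrightarrow> peval v (Conj S) = (\<forall>\<phi>\<in>S. peval v \<phi>)"
  unfolding Conj_def by (simp add: peval_conj_list Conj_set)

lemma wf_Conj: "finite S \<Longrightarrow> \<forall>\<phi>\<in>S. wf_form \<phi> \<Longrightarrow> wf_form (Conj S)"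
  unfolding Conj_def by (rule wf_conj_list) (simp add: Conj_set)

lemma deriv_from:
  assumes "\<forall>q\<in>set Ps. derivable A q \<and> wf_form q" "wf_form c"
    "\<forall>v. (\<forall>q\<in>set Ps. peval v q) \<longrightarrow> peval v c"
  shows "derivable A c"
  using assms
proof (induction Ps arbitrary: c)
  case Nil
  then show ?case by (auto intro!: derivable.Ax ax.taut simp: tautology_def)
next
  case (Cons q Ps)
  have "derivable A (Imp q c)"
    using Cons.prems by (intro Cons.IH) auto
  then show ?case using Cons.prems by (auto intro: derivable.MP)
qed

lemma incons:
  assumes "finite \<Gamma>" "\<forall>\<phi>\<in>\<Gamma>. wf_form \<phi>" "\<forall>q\<in>set Ps. derivable A q \<and> wf_form q"
    "\<forall>v. (\<forall>q\<in>set Ps. peval v q) \<longrightarrow> \<not> (\<forall>\<phi>\<in>\<Gamma>. peval v \<phi>)"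
  shows "derivable A (Neg (Conj \<Gamma>))"
  using assms by (intro deriv_from[of Ps]) (auto simp: peval_Conj wf_Conj)

lemma peval_sneg[simp]: "peval v (sneg \<phi>) = (\<not> peval v \<phi>)"
  by (cases \<phi>) auto

lemma wf_sneg: "wf_form \<phi> \<Longrightarrow> wf_form (sneg \<phi>)"
  by (cases \<phi>) auto

lemma finite_terms_of: "finite (terms_of \<phi>)"
  by (induction \<phi>) auto

lemma subforms_self: "\<phi> \<in> subforms \<phi>"
  by (cases \<phi>) auto

context
  fixes \<Sigma> :: "('p, 't, 'a) form set"
  assumes fc: "finite_closure \<Sigma>"
begin

lemma finS: "finite \<Sigma>" and wfS: "\<phi> \<in> \<Sigma> \<Longrightarrow> wf_form \<phi>"
  and subS: "\<phi> \<in> \<Sigma> \<Longrightarrow> \<psi> \<in> subforms \<phi> \<Longrightarrow> \<psi> \<in> \<Sigma>"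
  and eqS: "t \<in> T_of \<Sigma> \<Longrightarrow> s \<in> T_of \<Sigma> \<Longrightarrow> Eq t s \<in> \<Sigma>"
  using fc unfolding finite_closure_def by auto

lemma finT: "finite (T_of \<Sigma>)"
  unfolding T_of_def using finS by (auto simp: finite_terms_of)

lemma T_ofI: "\<phi> \<in> \<Sigma> \<Longrightarrow> t \<in> terms_of \<phi> \<Longrightarrow> t \<in> T_of \<Sigma>"
  unfolding T_of_def by auto

lemma snegS: "\<phi> \<in> \<Sigma> \<Longrightarrow> sneg \<phi> \<in> \<Sigma>"
proof (cases "\<exists>\<psi>. \<phi> = Neg \<psi>")
  case True
  assume a: "\<phi> \<in> \<Sigma>"
  from True obtain \<psi> where p: "\<phi> = Neg \<psi>" by blast
  then show ?thesis using subS[OF a, of \<psi>] by (simp add: subforms_self)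
next
  case False
  assume a: "\<phi> \<in> \<Sigma>"
  have "\<not> (\<exists>\<psi>. \<phi> = Neg \<psi> \<and> \<psi> \<in> \<Sigma>) \<longrightarrow> Neg \<phi> \<in> \<Sigma>" using fc a unfolding finite_closure_def by auto
  then show ?thesis using False by (cases \<phi>) auto
qed

lemma types_prop:
  assumes "\<Delta> \<in> Types \<Sigma>" "S \<subseteq> \<Delta>" "\<forall>q\<in>set Ps. PTKv_plus q \<and> wf_form q"
    "\<forall>v. (\<forall>q\<in>set Ps. peval v q) \<longrightarrow> \<not> (\<forall>\<phi>\<in>S. peval v \<phi>)"
  shows False
proof -
  have D: "\<Delta> \<subseteq> \<Sigma>" "\<not> PTKv_plus (Neg (Conj \<Delta>))" using assms(1) by (auto simp: Types_def)
  have "PTKv_plus (Neg (Conj \<Delta>))"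
    apply (rule incons[OF _ _ assms(3)])
    using D finS wfS assms(2,4) by (auto intro: finite_subset) blast
  then show False using D by simp
qed

lemma types_sat: "\<Delta> \<in> Types \<Sigma> \<Longrightarrow> \<phi> \<in> \<Sigma> \<Longrightarrow> \<phi> \<in> \<Delta> \<or> sneg \<phi> \<in> \<Delta>"
  by (auto simp: Types_def)

lemma types_neg:
  assumes "\<Delta> \<in> Types \<Sigma>" "Neg \<phi> \<in> \<Sigma>"
  shows "Neg \<phi> \<in> \<Delta> \<longleftrightarrow> \<phi> \<notin> \<Delta>"
proof
  assume "Neg \<phi> \<in> \<Delta>"
  then show "\<phi> \<notin> \<Delta>" using types_prop[OF assms(1), of "{Neg \<phi>, \<phi>}" "[]"] by auto
next
  assume "\<phi> \<notin> \<Delta>" then show "Neg \<phi> \<in> \<Delta>" using types_sat[OF assms] by auto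
qed

lemma types_imp:
  assumes "\<Delta> \<in> Types \<Sigma>" "Imp \<phi> \<psi> \<in> \<Sigma>"
  shows "Imp \<phi> \<psi> \<in> \<Delta> \<longleftrightarrow> (\<phi> \<in> \<Delta> \<longrightarrow> \<psi> \<in> \<Delta>)"
proof -
  have S: "\<phi> \<in> \<Sigma>" "\<psi> \<in> \<Sigma>" using subS[OF assms(2), of \<phi>] subS[OF assms(2), of \<psi>] by (auto simp: subforms_self)
  show ?thesis
  proof (intro iffI impI)
    assume a: "Imp \<phi> \<psi> \<in> \<Delta>" "\<phi> \<in> \<Delta>"
    show "\<psi> \<in> \<Delta>"
    proof (rule ccontr)
      assume "\<psi> \<notin> \<Delta>"
      then have "sneg \<psi> \<in> \<Delta>" using types_sat[OF assms(1) S(2)] by auto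
      then show False using types_prop[OF assms(1), of "{Imp \<phi> \<psi>, \<phi>, sneg \<psi>}" "[]"] a by auto
    qed
  next
    assume a: "\<phi> \<in> \<Delta> \<longrightarrow> \<psi> \<in> \<Delta>"
    show "Imp \<phi> \<psi> \<in> \<Delta>"
    proof (rule ccontr)
      assume "Imp \<phi> \<psi> \<notin> \<Delta>"
      then have n: "Neg (Imp \<phi> \<psi>) \<in> \<Delta>" using types_sat[OF assms] by auto
      show False
      proof (cases "\<phi> \<in> \<Delta>")
        case True
        then show False using a n types_prop[OF assms(1), of "{Neg (Imp \<phi> \<psi>), \<psi>}" "[]"] by auto
      next
        case False
        then have "sneg \<phi> \<in> \<Delta>" using types_sat[OF assms(1) S(1)] by auto
        then show False using n types_prop[OF assms(1), of "{Neg (Imp \<phi> \<psi>), sneg \<phi>}" "[]"] by auto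
      qed
    qed
  qed
qed


lemma eqT: "Eq t s \<in> \<Sigma> \<Longrightarrow> t \<in> T_of \<Sigma> \<and> s \<in> T_of \<Sigma>"
  using T_ofI[of "Eq t s"] by auto

lemma types_refl:
  assumes "\<Delta> \<in> Types \<Sigma>" "t \<in> T_of \<Sigma>"
  shows "Eq t t \<in> \<Delta>"
proof (rule ccontr)
  assume "Eq t t \<notin> \<Delta>"
  then have "Neg (Eq t t) \<in> \<Delta>" using types_sat[OF assms(1) eqS[OF assms(2) assms(2)]] by auto
  then show False
    by (intro types_prop[OF assms(1), of "{Neg (Eq t t)}" "[Eq t t]"])
       (auto intro!: derivable.Ax ax.intros)
qed

lemma types_sym:
  assumes "\<Delta> \<in> Types \<Sigma>" "t \<in> T_of \<Sigma>" "s \<in> T_of \<Sigma>" "Eq t s \<in> \<Delta>"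
  shows "Eq s t \<in> \<Delta>"
proof (rule ccontr)
  assume "Eq s t \<notin> \<Delta>"
  then have "Neg (Eq s t) \<in> \<Delta>" using types_sat[OF assms(1) eqS[OF assms(3) assms(2)]] by auto
  then show False using assms(4)
    by (intro types_prop[OF assms(1), of "{Neg (Eq s t), Eq t s}" "[Imp (Eq t s) (Eq s t)]"])
       (auto intro!: derivable.Ax ax.intros)
qed

lemma types_trans:
  assumes "\<Delta> \<in> Types \<Sigma>" "t \<in> T_of \<Sigma>" "s \<in> T_of \<Sigma>" "u \<in> T_of \<Sigma>" "Eq t s \<in> \<Delta>" "Eq s u \<in> \<Delta>"
  shows "Eq t u \<in> \<Delta>"
proof (rule ccontr)
  assume "Eq t u \<notin> \<Delta>"
  then have "Neg (Eq t u) \<in> \<Delta>" using types_sat[OF assms(1) eqS[OF assms(2) assms(4)]] by auto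
  moreover have "PTKv_plus (Imp (And (Eq t s) (Eq s u)) (Eq t u))"
    by (intro derivable.Ax ax.eq_trans) (simp add: And_def)
  ultimately show False using assms(5,6)
    by (intro types_prop[OF assms(1), of "{Neg (Eq t u), Eq t s, Eq s u}" "[Imp (And (Eq t s) (Eq s u)) (Eq t u)]"])
       (auto simp: And_def)
qed

lemma Fs_nonempty:
  assumes "\<Delta> \<in> Types \<Sigma>"
  shows "\<exists>f. f \<in> Fs \<Sigma> \<Delta>"
proof -
  let ?T = "T_of \<Sigma>"
  obtain h where h: "bij_betw h {1..card ?T} ?T" using ex_bij_betw_nat_finite_1[OF finT] by blast
  define g where "g = inv_into {1..card ?T} h"
  have g: "bij_betw g ?T {1..card ?T}" unfolding g_def using h by (rule bij_betw_inv_into)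
  define f where "f t = (if t \<in> ?T then Min (g ` {s\<in>?T. Eq t s \<in> \<Delta>}) else 0)" for t
  have cls: "{s\<in>?T. Eq t s \<in> \<Delta>} = {s\<in>?T. Eq t' s \<in> \<Delta>}"
    if "t \<in> ?T" "t' \<in> ?T" "Eq t t' \<in> \<Delta>" for t t'
    using that types_trans[OF assms] types_sym[OF assms] by blast
  have mem: "f t \<in> g ` {s\<in>?T. Eq t s \<in> \<Delta>}" if "t \<in> ?T" for t
    unfolding f_def using that types_refl[OF assms that] finT
    by (auto intro!: Min_in)
  have "f \<in> Fs \<Sigma> \<Delta>"
    unfolding Fs_def
  proof (intro CollectI conjI ballI allI impI)
    fix t assume t: "t \<in> ?T"
    show "f t \<in> {1..card ?T}" using mem[OF t] g by (auto simp: bij_betw_def)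
  next
    fix t assume "t \<notin> ?T" then show "f t = 0" by (simp add: f_def)
  next
    fix t s assume t: "t \<in> ?T" and s: "s \<in> ?T"
    show "f t = f s \<longleftrightarrow> Eq t s \<in> \<Delta>"
    proof
      assume "Eq t s \<in> \<Delta>" then show "f t = f s" using cls[OF t s] t s by (simp add: f_def)
    next
      assume e: "f t = f s"
      obtain a where a: "a \<in> ?T" "Eq t a \<in> \<Delta>" "f t = g a" using mem[OF t] by auto
      obtain b where b: "b \<in> ?T" "Eq s b \<in> \<Delta>" "f s = g b" using mem[OF s] by auto
      have "a = b" using a b e g by (auto simp: bij_betw_def inj_on_def)
      then show "Eq t s \<in> \<Delta>" using a b t s types_sym[OF assms] types_trans[OF assms] by blast
    qed
  qed
  then show ?thesis by blast
qed

lemma finite_Types: "finite (Types \<Sigma>)"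
proof -
  have "Types \<Sigma> \<subseteq> Pow \<Sigma>" by (auto simp: Types_def)
  then show ?thesis using finS by (simp add: finite_subset)
qed

lemma Tref_dec: "Tref \<Sigma> (Suc l) \<subseteq> Tref \<Sigma> l"
  by auto

lemma Tref_sub: "Tref \<Sigma> l \<subseteq> Types \<Sigma>"
  by (induction l) auto

lemma Tref_mono: "l \<le> m \<Longrightarrow> Tref \<Sigma> m \<subseteq> Tref \<Sigma> l"
  by (induction m rule: dec_induct) auto

lemma Tref_stab: "\<exists>l. Tref \<Sigma> (Suc l) = Tref \<Sigma> l"
proof (rule ccontr)
  assume "\<not> ?thesis"
  then have ne: "Tref \<Sigma> (Suc l) \<subset> Tref \<Sigma> l" for l using Tref_dec by blast
  have "card (Tref \<Sigma> l) + l \<le> card (Types \<Sigma>)" for l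
  proof (induction l)
    case 0 then show ?case by simp
  next
    case (Suc l)
    have "card (Tref \<Sigma> (Suc l)) < card (Tref \<Sigma> l)"
      using ne[of l] Tref_sub[of l] finite_Types by (meson psubset_card_mono finite_subset)
    then show ?case using Suc by simp
  qed
  from this[of "Suc (card (Types \<Sigma>))"] show False by simp
qed

lemma Tstar_fix:
  assumes "\<Delta> \<in> Types_star \<Sigma>"
  shows "FC_feasible \<Sigma> \<Delta> (Types_star \<Sigma>) i"
proof -
  obtain l where l: "Tref \<Sigma> (Suc l) = Tref \<Sigma> l" using Tref_stab by blast
  have const: "Tref \<Sigma> (l + k) = Tref \<Sigma> l" for k
    by (induction k) (use l in auto)
  have eq: "Types_star \<Sigma> = Tref \<Sigma> l"
  proof
    show "Types_star \<Sigma> \<subseteq> Tref \<Sigma> l" unfolding Types_star_def by auto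
  next
    show "Tref \<Sigma> l \<subseteq> Types_star \<Sigma>" unfolding Types_star_def
    proof
      fix x assume x: "x \<in> Tref \<Sigma> l"
      show "x \<in> (\<Inter>m. Tref \<Sigma> m)"
      proof
        fix m
        show "x \<in> Tref \<Sigma> m"
        proof (cases "m \<le> l")
          case True then show ?thesis using Tref_mono x by blast
        next
          case False then have "m = l + (m - l)" by simp
          then show ?thesis using const x by metis
        qed
      qed
    qed
  qed
  have "\<Delta> \<in> Tref \<Sigma> (Suc l)" using assms eq l by simp
  then show ?thesis using eq by simp
qed


lemma split_cons:
  assumes "finite \<Gamma>" "\<Gamma> \<subseteq> \<Sigma>" "a \<in> \<Sigma>" "\<not> derivable A (Neg (Conj \<Gamma>))"
  shows "\<not> derivable A (Neg (Conj (insert a \<Gamma>))) \<or> \<not> derivable A (Neg (Conj (insert (sneg a) \<Gamma>)))"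
proof (rule ccontr)
  assume "\<not> ?thesis"
  then have d: "derivable A (Neg (Conj (insert a \<Gamma>)))" "derivable A (Neg (Conj (insert (sneg a) \<Gamma>)))" by auto
  have w: "\<forall>\<phi>\<in>\<Gamma>. wf_form \<phi>" "wf_form a" "wf_form (sneg a)" using assms wfS wf_sneg by auto
  have "derivable A (Neg (Conj \<Gamma>))"
    apply (rule deriv_from[of "[Neg (Conj (insert a \<Gamma>)), Neg (Conj (insert (sneg a) \<Gamma>))]"])
    using d w assms(1) by (auto simp: wf_Conj peval_Conj)
  then show False using assms by simp
qed

lemma lindenbaum:
  assumes "chi \<in> \<Sigma>" "\<not> derivable A (Neg chi)"
  shows "\<exists>\<Gamma>. chi \<in> \<Gamma> \<and> \<Gamma> \<subseteq> \<Sigma> \<and> \<not> derivable A (Neg (Conj \<Gamma>)) \<and> (\<forall>\<phi>\<in>\<Sigma>. \<phi> \<in> \<Gamma> \<or> sneg \<phi> \<in> \<Gamma>)"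
proof -
  have "\<exists>\<Gamma>. chi \<in> \<Gamma> \<and> \<Gamma> \<subseteq> \<Sigma> \<and> \<not> derivable A (Neg (Conj \<Gamma>)) \<and> (\<forall>\<phi>\<in>F. \<phi> \<in> \<Gamma> \<or> sneg \<phi> \<in> \<Gamma>)"
    if "F \<subseteq> \<Sigma>" for F
  proof -
    have "finite F" using that finS finite_subset by blast
    then show ?thesis using that
    proof (induction F rule: finite_subset_induct)
      case empty
      have "\<not> derivable A (Neg (Conj {chi}))"
      proof
        assume "derivable A (Neg (Conj {chi}))"
        have "wf_form (Conj {chi})" using wfS[OF assms(1)] by (intro wf_Conj) auto
        then have p1: "\<forall>q\<in>set [Neg (Conj {chi})]. derivable A q \<and> wf_form q"
          using \<open>derivable A (Neg (Conj {chi}))\<close> by simp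
        have p2: "wf_form (Neg chi)" using wfS[OF assms(1)] by simp
        have p3: "\<forall>v. (\<forall>q\<in>set [Neg (Conj {chi})]. peval v q) \<longrightarrow> peval v (Neg chi)"
          by (simp add: peval_Conj[of "{chi}"])
        have "derivable A (Neg chi)" by (rule deriv_from[OF p1 p2 p3])
        then show False using assms by simp
      qed
      then show ?case using assms(1) by (intro exI[of _ "{chi}"]) auto
    next
      case (insert a F)
      then obtain \<Gamma> where G: "chi \<in> \<Gamma>" "\<Gamma> \<subseteq> \<Sigma>" "\<not> derivable A (Neg (Conj \<Gamma>))"
        "\<forall>\<phi>\<in>F. \<phi> \<in> \<Gamma> \<or> sneg \<phi> \<in> \<Gamma>" by blast
      have fG: "finite \<Gamma>" using G(2) finS finite_subset by blast
      from split_cons[OF fG G(2) insert(2) G(3)] show ?case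
      proof
        assume "\<not> derivable A (Neg (Conj (insert a \<Gamma>)))"
        moreover have "insert a \<Gamma> \<subseteq> \<Sigma>" using G(2) insert(2) by blast
        moreover have "\<forall>\<phi>\<in>insert a F. \<phi> \<in> insert a \<Gamma> \<or> sneg \<phi> \<in> insert a \<Gamma>" using G(4) by blast
        ultimately show ?case using G(1) by blast
      next
        assume "\<not> derivable A (Neg (Conj (insert (sneg a) \<Gamma>)))"
        moreover have "insert (sneg a) \<Gamma> \<subseteq> \<Sigma>" using G(2) snegS[OF insert(2)] by blast
        moreover have "\<forall>\<phi>\<in>insert a F. \<phi> \<in> insert (sneg a) \<Gamma> \<or> sneg \<phi> \<in> insert (sneg a) \<Gamma>" using G(4) by blast
        ultimately show ?case using G(1) by blast
      qed
    qed
  qed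
  from this[of \<Sigma>] show ?thesis by simp
qed

lemma Tstar_sub: "Types_star \<Sigma> \<subseteq> Types \<Sigma>"
  unfolding Types_star_def using Tref_sub by auto

lemma finite_X: "finite (FC_index \<Sigma> (Types_star \<Sigma>))"
proof -
  have "FC_index \<Sigma> (Types_star \<Sigma>) \<subseteq> Types \<Sigma> \<times>
      {f. \<forall>x. (x \<in> T_of \<Sigma> \<longrightarrow> f x \<in> {1..card (T_of \<Sigma>)}) \<and> (x \<notin> T_of \<Sigma> \<longrightarrow> f x = 0)}"
    using Tstar_sub by (auto simp: FC_index_def Fs_def)
  moreover have "finite (Types \<Sigma> \<times>
      {f. \<forall>x. (x \<in> T_of \<Sigma> \<longrightarrow> f x \<in> {1..card (T_of \<Sigma>)}) \<and> (x \<notin> T_of \<Sigma> \<longrightarrow> f x = 0)})"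
    using finite_Types finT by (intro finite_cartesian_product finite_set_of_finite_funs) auto
  ultimately show ?thesis by (rule finite_subset)
qed

lemma truth:
  fixes zf :: "('p, 't, 'a) form set \<Rightarrow> 'a \<Rightarrow> ('p, 't, 'a) form set \<times> ('t \<Rightarrow> nat) \<Rightarrow> real"
  assumes zf: "\<And>\<Delta> i. \<Delta> \<in> Types_star \<Sigma> \<Longrightarrow> FCw \<Sigma> \<Delta> (Types_star \<Sigma>) i (zf \<Delta> i)"
  defines "X \<equiv> FC_index \<Sigma> (Types_star \<Sigma>)"
  shows "\<phi> \<in> \<Sigma> \<Longrightarrow> x \<in> X \<Longrightarrow>
    fsat X (\<lambda>i x y. zf (fst x) i y) (\<lambda>x q. PVar q \<in> fst x) (\<lambda>x t. snd x t) x \<phi> \<longleftrightarrow> \<phi> \<in> fst x"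
proof (induction \<phi> arbitrary: x)
  case (PVar q)
  then show ?case by simp
next
  case (Eq t s)
  then have "fst x \<in> Types \<Sigma>" "snd x \<in> Fs \<Sigma> (fst x)" using Tstar_sub by (auto simp: X_def FC_index_def)
  then show ?case using eqT[OF Eq(1)] by (auto simp: Fs_def)
next
  case (Neg \<phi>)
  have T: "fst x \<in> Types \<Sigma>" using Neg.prems Tstar_sub by (auto simp: X_def FC_index_def)
  have "\<phi> \<in> \<Sigma>" using subS[OF Neg.prems(1), of \<phi>] by (simp add: subforms_self)
  then show ?case using Neg types_neg[OF T Neg.prems(1)] by simp
next
  case (Imp \<phi> \<psi>)
  have T: "fst x \<in> Types \<Sigma>" using Imp.prems Tstar_sub by (auto simp: X_def FC_index_def)
  have "\<phi> \<in> \<Sigma>" "\<psi> \<in> \<Sigma>" using subS[OF Imp.prems(1), of \<phi>] subS[OF Imp.prems(1), of \<psi>] by (auto simp: subforms_self)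
  then show ?case using Imp types_imp[OF T Imp.prems(1)] by simp
next
  case (Kn i \<theta> \<phi>)
  have T: "fst x \<in> Types \<Sigma>" "fst x \<in> Types_star \<Sigma>" using Kn.prems Tstar_sub by (auto simp: X_def FC_index_def)
  have "\<phi> \<in> \<Sigma>" using subS[OF Kn.prems(1), of \<phi>] by (auto simp: subforms_self)
  then have seteq: "{y\<in>X. fsat X (\<lambda>i x y. zf (fst x) i y) (\<lambda>x q. PVar q \<in> fst x) (\<lambda>x t. snd x t) y \<phi>}
     = {(\<Delta>, f)\<in>X. \<phi> \<in> \<Delta>}" using Kn.IH by auto
  have w: "FCw \<Sigma> (fst x) (Types_star \<Sigma>) i (zf (fst x) i)" using zf T(2) by blast
  have "Neg (Kn i \<theta> \<phi>) \<in> \<Sigma>" using snegS[OF Kn.prems(1)] by simp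
  note tn = types_neg[OF T(1) this]
  have lhs: "fsat X (\<lambda>i x y. zf (fst x) i y) (\<lambda>x q. PVar q \<in> fst x) (\<lambda>x t. snd x t) x (Kn i \<theta> \<phi>)
     \<longleftrightarrow> (\<Sum>y\<in>{(\<Delta>, f)\<in>X. \<phi> \<in> \<Delta>}. zf (fst x) i y) \<ge> real_of_rat \<theta>"
    by (simp only: fsat.simps seteq)
  show ?case
  proof (cases "Kn i \<theta> \<phi> \<in> fst x")
    case True
    have "(\<Sum>y\<in>{(\<Delta>, f)\<in>X. \<phi> \<in> \<Delta>}. zf (fst x) i y) \<ge> real_of_rat \<theta>"
      unfolding X_def by (rule FCw_Kn[OF w True])
    then show ?thesis using lhs True by blast
  next
    case False
    then have "Neg (Kn i \<theta> \<phi>) \<in> fst x" using tn by blast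
    then have "(\<Sum>y\<in>{(\<Delta>, f)\<in>X. \<phi> \<in> \<Delta>}. zf (fst x) i y) < real_of_rat \<theta>"
      unfolding X_def by (rule FCw_nKn[OF w])
    then show ?thesis using lhs False by linarith
  qed
next
  case (Kv i \<eta> t)
  have T: "fst x \<in> Types \<Sigma>" "fst x \<in> Types_star \<Sigma>" using Kv.prems Tstar_sub by (auto simp: X_def FC_index_def)
  have tT: "t \<in> T_of \<Sigma>" using T_ofI[OF Kv.prems(1)] by simp
  have eta: "real_of_rat \<eta> > 1/2" using wfS[OF Kv.prems(1)]
    by (metis of_rat_less of_rat_1 of_rat_divide of_rat_numeral_eq wf_form.simps(6))
  have w: "FCw \<Sigma> (fst x) (Types_star \<Sigma>) i (zf (fst x) i)" using zf T(2) by blast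
  let ?S = "\<lambda>d. (\<Sum>y\<in>{y\<in>X. snd y t = d}. zf (fst x) i y)"
  have nn: "\<And>y. y \<in> X \<Longrightarrow> zf (fst x) i y \<ge> 0"
    using FCw_nn[OF w] unfolding X_def by blast
  have one: "(\<Sum>y\<in>X. zf (fst x) i y) = 1"
    using FCw_one[OF w] unfolding X_def .
  have finX: "finite X" unfolding X_def by (rule finite_X)
  have "Neg (Kv i \<eta> t) \<in> \<Sigma>" using snegS[OF Kv.prems(1)] by simp
  note tn = types_neg[OF T(1) this]
  have lhs: "fsat X (\<lambda>i x y. zf (fst x) i y) (\<lambda>x q. PVar q \<in> fst x) (\<lambda>x t. snd x t) x (Kv i \<eta> t)
     \<longleftrightarrow> (\<exists>!d. ?S d \<ge> real_of_rat \<eta>)"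
    by (simp only: fsat.simps)
  show ?case
  proof (cases "Kv i \<eta> t \<in> fst x")
    case True
    obtain k where "k \<in> {1..card (T_of \<Sigma>)}"
      "(\<Sum>y\<in>{(\<Delta>, f)\<in>FC_index \<Sigma> (Types_star \<Sigma>). f t = k}. zf (fst x) i y) \<ge> real_of_rat \<eta>"
      using FCw_Kv[OF w True] by blast
    then have k: "?S k \<ge> real_of_rat \<eta>" unfolding X_def set_snd by simp
    have uniq: "d = k" if "?S d \<ge> real_of_rat \<eta>" for d
    proof (rule ccontr)
      assume dk: "d \<noteq> k"
      have "?S d + ?S k = (\<Sum>y\<in>{y\<in>X. snd y t = d} \<union> {y\<in>X. snd y t = k}. zf (fst x) i y)"
        using dk finX by (subst sum.union_disjoint) auto
      also have "\<dots> \<le> (\<Sum>y\<in>X. zf (fst x) i y)"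
        using finX nn by (intro sum_mono2) auto
      finally show False using one that k eta by linarith
    qed
    have "\<exists>!d. ?S d \<ge> real_of_rat \<eta>" using k uniq by blast
    then show ?thesis using True lhs by blast
  next
    case False
    then have nk: "Neg (Kv i \<eta> t) \<in> fst x" using tn by blast
    have Sl: "?S d < real_of_rat \<eta>" for d
    proof (cases "d \<in> {1..card (T_of \<Sigma>)}")
      case True
      have "(\<Sum>y\<in>{(\<Delta>, f)\<in>FC_index \<Sigma> (Types_star \<Sigma>). f t = d}. zf (fst x) i y) < real_of_rat \<eta>"
        by (rule FCw_nKv[OF w nk True])
      then show ?thesis unfolding X_def set_snd by simp
    next
      case False
      have e: "{y\<in>X. snd y t = d} = {}" using False tT by (auto simp: X_def FC_index_def Fs_def)
      have "?S d = 0" by (subst e) (rule sum.empty)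
      then show ?thesis using eta by linarith
    qed
    have "\<not> (\<exists>d. ?S d \<ge> real_of_rat \<eta>)" using Sl by (meson not_le)
    then show ?thesis using False lhs by blast
  qed
qed

end

theorem theorem2:
  fixes chi :: "('p::countable, 't::countable, 'a::finite) form"
    and \<Sigma> :: "('p, 't, 'a) form set"
    and ig :: "('p, 't, 'a) form set \<Rightarrow> 'a"
  assumes "finite_closure \<Sigma>"
    and "chi \<in> \<Sigma>"
    and "agent_choice \<Sigma> ig"
    and "\<not> PTKv_star \<Sigma> ig (Neg chi)"
  shows "satisfiable_form chi"
proof -
  note fc = assms(1)
  let ?A = "star_axioms \<Sigma> ig"
  obtain \<Gamma> where G: "chi \<in> \<Gamma>" "\<Gamma> \<subseteq> \<Sigma>" "\<not> derivable ?A (Neg (Conj \<Gamma>))"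
    "\<forall>\<phi>\<in>\<Sigma>. \<phi> \<in> \<Gamma> \<or> sneg \<phi> \<in> \<Gamma>"
    using lindenbaum[OF fc assms(2,4)] by blast
  have GT: "\<Gamma> \<in> Types \<Sigma>" using G deriv_mono by (auto simp: Types_def)
  have finG: "finite \<Gamma>" using G(2) finS[OF fc] finite_subset by blast
  have GS: "\<Gamma> \<in> Types_star \<Sigma>"
  proof (rule ccontr)
    assume "\<Gamma> \<notin> Types_star \<Sigma>"
    then have "Neg (Conj (Lambda (ig \<Gamma>) \<Gamma>)) \<in> ?A" using GT by (auto simp: star_axioms_def)
    then have d: "derivable ?A (Neg (Conj (Lambda (ig \<Gamma>) \<Gamma>)))" by (rule derivable.Extra)
    have sub: "Lambda (ig \<Gamma>) \<Gamma> \<subseteq> \<Gamma>" by (auto simp: Lambda_def)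
    then have finL: "finite (Lambda (ig \<Gamma>) \<Gamma>)" using finG finite_subset by blast
    have wG: "\<forall>\<phi>\<in>\<Gamma>. wf_form \<phi>" using G(2) wfS[OF fc] by auto
    have wL: "\<forall>\<phi>\<in>Lambda (ig \<Gamma>) \<Gamma>. wf_form \<phi>" using sub wG by blast
    have p1: "\<forall>q\<in>set [Neg (Conj (Lambda (ig \<Gamma>) \<Gamma>))]. derivable ?A q \<and> wf_form q"
      using d wf_Conj[OF finL wL] by simp
    have p2: "wf_form (Neg (Conj \<Gamma>))" using wf_Conj[OF finG wG] by simp
    have p3: "\<forall>v. (\<forall>q\<in>set [Neg (Conj (Lambda (ig \<Gamma>) \<Gamma>))]. peval v q) \<longrightarrow> peval v (Neg (Conj \<Gamma>))"
      using sub by (auto simp: peval_Conj[OF finL] peval_Conj[OF finG])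
    have "derivable ?A (Neg (Conj \<Gamma>))" by (rule deriv_from[OF p1 p2 p3])
    then show False using G(3) by simp
  qed
  obtain f0 where f0: "f0 \<in> Fs \<Sigma> \<Gamma>" using Fs_nonempty[OF fc GT] by blast
  define X where "X = FC_index \<Sigma> (Types_star \<Sigma>)"
  have x0: "(\<Gamma>, f0) \<in> X" using GS f0 by (simp add: X_def FC_index_def)
  define zf where "zf \<Delta> i = (SOME z. FCw \<Sigma> \<Delta> (Types_star \<Sigma>) i z)" for \<Delta> i
  have zf: "FCw \<Sigma> \<Delta> (Types_star \<Sigma>) i (zf \<Delta> i)" if "\<Delta> \<in> Types_star \<Sigma>" for \<Delta> i
  proof -
    have "\<exists>z. FCw \<Sigma> \<Delta> (Types_star \<Sigma>) i z"
      using Tstar_fix[OF fc that, of i] unfolding FC_feasible_iff .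
    then show ?thesis unfolding zf_def by (rule someI_ex)
  qed
  let ?p = "\<lambda>i x y. zf (fst x) i y"
  have finX: "finite X" unfolding X_def by (rule finite_X[OF fc])
  have nn: "?p i x y \<ge> 0" if "x \<in> X" "y \<in> X" for i x y
    using zf[of "fst x" i] that unfolding FCw_def X_def FC_index_def by auto
  have one: "(\<Sum>y\<in>X. ?p i x y) = 1" if "x \<in> X" for i x
    using zf[of "fst x" i] that unfolding FCw_def X_def FC_index_def by auto
  obtain M :: "(nat, nat, 'a, 'p, 't) Defs.model" and enc where
    M: "is_model M" "\<forall>x\<in>X. enc x \<in> W M \<and> (\<forall>\<phi>. sat M (enc x) \<phi> =
        fsat X ?p (\<lambda>x q. PVar q \<in> fst x) (\<lambda>x t. snd x t) x \<phi>)"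
  proof -
    have "\<exists>M :: (nat, nat, 'a, 'p, 't) Defs.model. \<exists>enc. is_model M \<and> (\<forall>x\<in>X. enc x \<in> W M \<and> (\<forall>\<phi>. sat M (enc x) \<phi> =
        fsat X ?p (\<lambda>x q. PVar q \<in> fst x) (\<lambda>x t. snd x t) x \<phi>))"
      by (rule transfer) (use finX x0 nn one in auto)
    then show ?thesis using that by blast
  qed
  have "sat M (enc (\<Gamma>, f0)) chi"
    using M(2) x0 truth[OF fc zf, of chi "(\<Gamma>, f0)"] assms(2) G(1) by (simp add: X_def)
  then show ?thesis unfolding satisfiable_form_def using M x0 by blast
qed

end
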